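(* Let $\Bbbk$ be a field and $G$ a finite abelian group, written as $G=G_1\oplus\cdots\oplus G_p$ with each $G_i$ a finite cyclic group. Then $\operatorname{Frobdim}(\Bbbk G)=\prod_{i=1}^p|G_i|$.
   Context: $\Bbbk G$ is the group algebra. A nearly Frobenius coproduct on a $\Bbbk$-algebra $A$ is a $\Bbbk$-linear map $\Delta:A\to A\otimes_\Bbbk A$ that is an $A$-bimodule morphism, i.e. $\Delta(ab)=(a\otimes 1)\Delta(b)=\Delta(a)(1\otimes b)$ for all $a,b\in A$. The Frobenius space of $A$ is the vector space of all such coproducts, and $\operatorname{Frobdim}A$ is its dimension over $\Bbbk$. *)

theory Defs
  imports "HOL-Algebra.Algebra" "HOL-Library.Function_Algebras"
begin

text \<open>The group algebra of a finite group G over a field 'k, realised as the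
  functions carrier G \<Rightarrow> 'k (zero outside the carrier), with convolution.\<close>

definition grp_alg :: "('a, 'm) monoid_scheme \<Rightarrow> ('a \<Rightarrow> 'k::field) set" where
  "grp_alg G = {f. \<forall>x. x \<notin> carrier G \<longrightarrow> f x = 0}"

definition grp_conv :: "('a, 'm) monoid_scheme \<Rightarrow> ('a \<Rightarrow> 'k::field) \<Rightarrow> ('a \<Rightarrow> 'k) \<Rightarrow> ('a \<Rightarrow> 'k)" where
  "grp_conv G f g = (\<lambda>x. if x \<in> carrier G
      then (\<Sum>y\<in>carrier G. f y * g (inv\<^bsub>G\<^esub> y \<otimes>\<^bsub>G\<^esub> x)) else 0)"

definition grp_unit :: "('a, 'm) monoid_scheme \<Rightarrow> ('a \<Rightarrow> 'k::field)" where
  "grp_unit G = (\<lambda>x. if x = \<one>\<^bsub>G\<^esub> then 1 else 0)"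

text \<open>kG \<otimes> kG is identified with the group algebra k[G \<times> G] of the direct product
  G \<times>\<times> G via the canonical isomorphism a \<otimes> b \<mapsto> (\<lambda>(h,k). a h * b k).\<close>
definition tens :: "('a \<Rightarrow> 'k::field) \<Rightarrow> ('a \<Rightarrow> 'k) \<Rightarrow> ('a \<times> 'a \<Rightarrow> 'k)" where
  "tens a b = (\<lambda>(h, k). a h * b k)"

text \<open>Nearly Frobenius coproducts on kG: k-linear maps kG \<rightarrow> kG \<otimes> kG that are
  kG-bimodule morphisms, Delta(ab) = (a\<otimes>1)Delta(b) = Delta(a)(1\<otimes>b).  Maps are
  taken to be zero outside kG (so that they are determined by their action on kG).\<close>
definition nf_coproduct :: "('a, 'm) monoid_scheme \<Rightarrow> (('a \<Rightarrow> 'k::field) \<Rightarrow> ('a \<times> 'a \<Rightarrow> 'k)) \<Rightarrow> bool" where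
  "nf_coproduct G \<Delta> \<longleftrightarrow>
     (\<forall>f \<in> grp_alg G. \<Delta> f \<in> grp_alg (G \<times>\<times> G)) \<and>
     (\<forall>f. f \<notin> grp_alg G \<longrightarrow> \<Delta> f = 0) \<and>
     (\<forall>f \<in> grp_alg G. \<forall>g \<in> grp_alg G. \<Delta> (f + g) = \<Delta> f + \<Delta> g) \<and>
     (\<forall>c. \<forall>f \<in> grp_alg G. \<Delta> (\<lambda>x. c * f x) = (\<lambda>p. c * \<Delta> f p)) \<and>
     (\<forall>a \<in> grp_alg G. \<forall>b \<in> grp_alg G.
        \<Delta> (grp_conv G a b) = grp_conv (G \<times>\<times> G) (tens a (grp_unit G)) (\<Delta> b) \<and>
        \<Delta> (grp_conv G a b) = grp_conv (G \<times>\<times> G) (\<Delta> a) (tens (grp_unit G) b))"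

definition frob_space :: "'k::field itself \<Rightarrow> ('a, 'm) monoid_scheme \<Rightarrow> (('a \<Rightarrow> 'k) \<Rightarrow> ('a \<times> 'a \<Rightarrow> 'k)) set" where
  "frob_space _ G = {\<Delta>. nf_coproduct G \<Delta>}"

definition frobdim :: "'k::field itself \<Rightarrow> ('a, 'm) monoid_scheme \<Rightarrow> nat" where
  "frobdim K G = vector_space.dim
      (\<lambda>(c::'k) (\<Delta> :: ('a \<Rightarrow> 'k) \<Rightarrow> ('a \<times> 'a \<Rightarrow> 'k)). \<lambda>f p. c * \<Delta> f p)
      (frob_space K G)"

end

theory Submission
  imports Defs
begin

lemma sum_fun_apply: "(\<Sum>i\<in>A. (f i :: 'x \<Rightarrow> 'y::comm_monoid_add)) x = (\<Sum>i\<in>A. f i x)"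
  by (induction A rule: infinite_finite_induct) auto

interpretation V: vector_space "\<lambda>(c::'k::field) (\<Delta>::('x \<Rightarrow> 'k) \<Rightarrow> ('x \<times> 'x \<Rightarrow> 'k)). \<lambda>f p. c * \<Delta> f p"
  by unfold_locales (auto simp: fun_eq_iff algebra_simps)

lemma ifmult: "(if P then (1::'k::field) else 0) * t = (if P then t else 0)" "t * (if P then (1::'k::field) else 0) = (if P then t else 0)"
  "t * ((if P then (1::'k::field) else 0) * s) = (if P then t * s else 0)"
  "(if P then (a::'k::field) else 0) * t = (if P then a * t else 0)"
  by auto

lemma sum_if_out: "(\<Sum>z\<in>B. if P then f z else 0) = (if P then (\<Sum>z\<in>B. f z) else 0)"
  by simp

locale fgrp = group G for G (structure) + assumes fin: "finite (carrier G)"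

context fgrp begin

lemma invprod: "p \<in> carrier (G \<times>\<times> G) \<Longrightarrow> inv\<^bsub>G \<times>\<times> G\<^esub> p \<otimes>\<^bsub>G \<times>\<times> G\<^esub> (x, y) = (inv (fst p) \<otimes> x, inv (snd p) \<otimes> y)"
  by (cases p) (simp add: is_group)

lemma conv_prod:
  assumes "x \<in> carrier G" "y \<in> carrier G"
  shows "grp_conv (G \<times>\<times> G) u w (x, y) = (\<Sum>z1\<in>carrier G. \<Sum>z2\<in>carrier G. (u (z1, z2) :: 'k::field) * w (inv z1 \<otimes> x, inv z2 \<otimes> y))"
proof -
  have "grp_conv (G \<times>\<times> G) u w (x, y) = (\<Sum>p\<in>carrier G \<times> carrier G. u p * w (inv (fst p) \<otimes> x, inv (snd p) \<otimes> y))"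
    using assms unfolding grp_conv_def by (auto intro!: sum.cong simp: invprod simp del: carrier_DirProd) (auto simp: invprod)
  also have "\<dots> = (\<Sum>z1\<in>carrier G. \<Sum>z2\<in>carrier G. u (z1, z2) * w (inv z1 \<otimes> x, inv z2 \<otimes> y))"
    by (simp add: sum.cartesian_product case_prod_beta)
  finally show ?thesis .
qed

lemma L1:
  assumes "x \<in> carrier G" "y \<in> carrier G"
  shows "grp_conv (G \<times>\<times> G) (tens a (grp_unit G)) w (x, y) = (\<Sum>z\<in>carrier G. (a z :: 'k::field) * w (inv z \<otimes> x, y))"
proof -
  have "grp_conv (G \<times>\<times> G) (tens a (grp_unit G)) w (x, y) =
     (\<Sum>z1\<in>carrier G. \<Sum>z2\<in>carrier G. a z1 * (if z2 = \<one> then 1 else 0) * w (inv z1 \<otimes> x, inv z2 \<otimes> y))"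
    using assms by (simp add: conv_prod tens_def grp_unit_def)
  also have "\<dots> = (\<Sum>z1\<in>carrier G. a z1 * w (inv z1 \<otimes> x, y))"
    using assms fin by (simp add: ifmult sum_if_out)
  finally show ?thesis .
qed

lemma L2:
  assumes "x \<in> carrier G" "y \<in> carrier G"
  shows "grp_conv (G \<times>\<times> G) w (tens (grp_unit G) b) (x, y) = (\<Sum>z\<in>carrier G. w (x, z) * (b (inv z \<otimes> y) :: 'k::field))"
proof -
  have "grp_conv (G \<times>\<times> G) w (tens (grp_unit G) b) (x, y) =
     (\<Sum>z1\<in>carrier G. \<Sum>z2\<in>carrier G. w (z1, z2) * ((if inv z1 \<otimes> x = \<one> then 1 else 0) * b (inv z2 \<otimes> y)))"
    using assms by (simp add: conv_prod tens_def grp_unit_def)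
  also have "\<dots> = (\<Sum>z1\<in>carrier G. \<Sum>z2\<in>carrier G. (if z1 = x then 1 else 0) * (w (z1, z2) * b (inv z2 \<otimes> y)))"
  proof (rule sum.cong[OF refl], rule sum.cong[OF refl])
    fix z1 z2 assume "z1 \<in> carrier G"
    then have "(inv z1 \<otimes> x = \<one>) = (z1 = x)" using assms
      by (metis inv_comm inv_inv l_inv_ex r_inv inv_equality inv_closed)
    then show "w (z1, z2) * ((if inv z1 \<otimes> x = \<one> then 1 else 0) * b (inv z2 \<otimes> y)) = (if z1 = x then 1 else 0) * (w (z1, z2) * b (inv z2 \<otimes> y))"
      by simp
  qed
  also have "\<dots> = (\<Sum>z\<in>carrier G. w (x, z) * b (inv z \<otimes> y))"
    using assms fin by (simp add: ifmult sum_if_out)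
  finally show ?thesis .
qed

lemma linv_assoc [simp]: "x \<in> carrier G \<Longrightarrow> y \<in> carrier G \<Longrightarrow> inv x \<otimes> (x \<otimes> y) = y"
  by (simp add: m_assoc[symmetric])
lemma rinv_assoc [simp]: "x \<in> carrier G \<Longrightarrow> y \<in> carrier G \<Longrightarrow> x \<otimes> (inv x \<otimes> y) = y"
  by (simp add: m_assoc[symmetric])

lemma sum_ltrans:
  assumes "p \<in> carrier G"
  shows "(\<Sum>z\<in>carrier G. F z) = (\<Sum>z\<in>carrier G. F (p \<otimes> z))"
  by (rule sum.reindex_bij_witness[where i="\<lambda>z. p \<otimes> z" and j="\<lambda>z. inv p \<otimes> z"]) (use assms in auto)

definition D :: "'a \<Rightarrow> ('a \<Rightarrow> 'k::field) \<Rightarrow> ('a \<times> 'a \<Rightarrow> 'k)" where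
  "D c f = (if f \<in> grp_alg G then (\<lambda>(x,y). if x \<in> carrier G \<and> y \<in> carrier G then f (x \<otimes> inv c \<otimes> y) else 0) else 0)"

lemma conv_in: "grp_conv G a b \<in> grp_alg G"
  by (simp add: grp_conv_def grp_alg_def)

lemma D_app: "f \<in> grp_alg G \<Longrightarrow> x \<in> carrier G \<Longrightarrow> y \<in> carrier G \<Longrightarrow> D c f (x, y) = f (x \<otimes> inv c \<otimes> y)"
  by (simp add: D_def)

lemma D_nf:
  assumes c: "c \<in> carrier G"
  shows "nf_coproduct G (D c :: ('a \<Rightarrow> 'k::field) \<Rightarrow> _)"
  unfolding nf_coproduct_def
proof (intro conjI ballI allI impI)
  fix f :: "'a \<Rightarrow> 'k" assume "f \<in> grp_alg G"
  then show "D c f \<in> grp_alg (G \<times>\<times> G)" by (auto simp: D_def grp_alg_def)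
next
  fix f :: "'a \<Rightarrow> 'k" assume "f \<notin> grp_alg G"
  then show "D c f = 0" by (simp add: D_def)
next
  fix f g :: "'a \<Rightarrow> 'k" assume "f \<in> grp_alg G" "g \<in> grp_alg G"
  then show "D c (f + g) = D c f + D c g"
    by (auto simp: D_def grp_alg_def fun_eq_iff)
next
  fix f :: "'a \<Rightarrow> 'k" and k :: 'k assume "f \<in> grp_alg G"
  then show "D c (\<lambda>x. k * f x) = (\<lambda>p. k * D c f p)"
    by (auto simp: D_def grp_alg_def fun_eq_iff)
next
  fix a b :: "'a \<Rightarrow> 'k" assume a: "a \<in> grp_alg G" and b: "b \<in> grp_alg G"
  show "D c (grp_conv G a b) = grp_conv (G \<times>\<times> G) (tens a (grp_unit G)) (D c b)"
  proof (rule ext, clarify)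
    fix x y
    show "D c (grp_conv G a b) (x, y) = grp_conv (G \<times>\<times> G) (tens a (grp_unit G)) (D c b) (x, y)"
    proof (cases "x \<in> carrier G \<and> y \<in> carrier G")
      case True
      then have "grp_conv (G \<times>\<times> G) (tens a (grp_unit G)) (D c b) (x, y)
         = (\<Sum>z\<in>carrier G. a z * b (inv z \<otimes> x \<otimes> inv c \<otimes> y))"
        using b by (simp add: L1 D_app)
      then show ?thesis using True c
        by (subst D_app[OF conv_in]) (auto simp: grp_conv_def m_assoc)
    next
      case False
      then show ?thesis by (auto simp: D_def conv_in grp_conv_def)
    qed
  qed
  show "D c (grp_conv G a b) = grp_conv (G \<times>\<times> G) (D c a) (tens (grp_unit G) b)"
  proof (rule ext, clarify)
    fix x y
    show "D c (grp_conv G a b) (x, y) = grp_conv (G \<times>\<times> G) (D c a) (tens (grp_unit G) b) (x, y)"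
    proof (cases "x \<in> carrier G \<and> y \<in> carrier G")
      case True
      then have "grp_conv (G \<times>\<times> G) (D c a) (tens (grp_unit G) b) (x, y)
         = (\<Sum>z\<in>carrier G. a (x \<otimes> inv c \<otimes> z) * b (inv z \<otimes> y))"
        using a by (simp add: L2 D_app)
      also have "\<dots> = (\<Sum>z\<in>carrier G. a z * b (inv z \<otimes> (x \<otimes> inv c \<otimes> y)))"
        using True c
        by (subst sum_ltrans[where p="x \<otimes> inv c"]) (auto simp: m_assoc inv_mult_group)
      finally show ?thesis using True c
        by (subst D_app[OF conv_in]) (auto simp: grp_conv_def)
    next
      case False
      then show ?thesis by (auto simp: D_def conv_in grp_conv_def)
    qed
  qed
qed

lemma unit_in: "grp_unit G \<in> grp_alg G"
  by (simp add: grp_unit_def grp_alg_def)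

lemma inv_eq_one_iff: "c \<in> carrier G \<Longrightarrow> c0 \<in> carrier G \<Longrightarrow> (inv c \<otimes> c0 = \<one>) = (c = c0)"
  by (metis rinv_assoc r_one l_inv)

lemma D_unit: "c \<in> carrier G \<Longrightarrow> c0 \<in> carrier G \<Longrightarrow> D c (grp_unit G :: 'a \<Rightarrow> 'k::field) (\<one>, c0) = (if c = c0 then 1 else 0)"
  by (subst D_app[OF unit_in]) (auto simp: grp_unit_def inv_eq_one_iff)

lemma D_inj: "inj_on (D :: 'a \<Rightarrow> ('a \<Rightarrow> 'k::field) \<Rightarrow> _) (carrier G)"
proof (rule inj_onI)
  fix c c' assume c: "c \<in> carrier G" and c': "c' \<in> carrier G" and eq: "(D c :: ('a \<Rightarrow> 'k) \<Rightarrow> _) = D c'"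
  have "(D c :: ('a \<Rightarrow> 'k) \<Rightarrow> _) (grp_unit G) (\<one>, c) = D c' (grp_unit G) (\<one>, c)" by (simp add: eq)
  then show "c = c'" using c c' by (simp add: D_unit split: if_splits)
qed

lemma conv_unit_r: "f \<in> grp_alg G \<Longrightarrow> grp_conv G f (grp_unit G) = (f :: 'a \<Rightarrow> 'k::field)"
proof (rule ext)
  fix x assume f: "f \<in> grp_alg G"
  show "grp_conv G f (grp_unit G) x = f x"
  proof (cases "x \<in> carrier G")
    case True
    have "grp_conv G f (grp_unit G) x = (\<Sum>y\<in>carrier G. if y = x then f y else 0)"
      using True by (auto simp: grp_conv_def grp_unit_def inv_eq_one_iff intro!: sum.cong)
    then show ?thesis using True fin by simp
  next
    case False then show ?thesis using f by (simp add: grp_conv_def grp_alg_def)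
  qed
qed

lemma conv_unit_l: "f \<in> grp_alg G \<Longrightarrow> grp_conv G (grp_unit G) f = (f :: 'a \<Rightarrow> 'k::field)"
proof (rule ext)
  fix x assume f: "f \<in> grp_alg G"
  show "grp_conv G (grp_unit G) f x = f x"
  proof (cases "x \<in> carrier G")
    case True
    have "grp_conv G (grp_unit G) f x = (\<Sum>y\<in>carrier G. if y = \<one> then f (inv y \<otimes> x) else 0)"
      using True by (auto simp: grp_conv_def grp_unit_def intro!: sum.cong)
    then show ?thesis using True fin by simp
  next
    case False then show ?thesis using f by (simp add: grp_conv_def grp_alg_def)
  qed
qed

lemma nf_invariance:
  assumes nf: "nf_coproduct G (\<Delta> :: ('a \<Rightarrow> 'k::field) \<Rightarrow> _)"
    and g: "g \<in> carrier G" and x: "x \<in> carrier G" and y: "y \<in> carrier G"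
  shows "\<Delta> (grp_unit G) (inv g \<otimes> x, y) = \<Delta> (grp_unit G) (x, y \<otimes> inv g)"
proof -
  define e :: "'a \<Rightarrow> 'k" where "e = (\<lambda>z. if z = g then 1 else 0)"
  have e: "e \<in> grp_alg G" using g by (auto simp: e_def grp_alg_def)
  let ?u = "\<Delta> (grp_unit G)"
  have "\<Delta> e = \<Delta> (grp_conv G e (grp_unit G))" by (simp add: conv_unit_r[OF e])
  also have "\<dots> = grp_conv (G \<times>\<times> G) (tens e (grp_unit G)) ?u"
    using nf e unit_in unfolding nf_coproduct_def by blast
  finally have 1: "\<Delta> e (x, y) = (\<Sum>z\<in>carrier G. e z * ?u (inv z \<otimes> x, y))"
    using x y by (simp add: L1)
  have "\<Delta> e = \<Delta> (grp_conv G (grp_unit G) e)" by (simp add: conv_unit_l[OF e])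
  also have "\<dots> = grp_conv (G \<times>\<times> G) ?u (tens (grp_unit G) e)"
    using nf e unit_in unfolding nf_coproduct_def by blast
  finally have 2: "\<Delta> e (x, y) = (\<Sum>z\<in>carrier G. ?u (x, z) * e (inv z \<otimes> y))"
    using x y by (simp add: L2)
  have "(\<Sum>z\<in>carrier G. e z * ?u (inv z \<otimes> x, y)) = ?u (inv g \<otimes> x, y)"
    using g fin by (simp add: e_def ifmult)
  moreover have "(\<Sum>z\<in>carrier G. ?u (x, z) * e (inv z \<otimes> y)) = (\<Sum>z\<in>carrier G. if z = y \<otimes> inv g then ?u (x, z) else 0)"
  proof (rule sum.cong[OF refl])
    fix z assume z: "z \<in> carrier G"
    have "(inv z \<otimes> y = g) = (z = y \<otimes> inv g)"
      using z y g by (metis inv_closed inv_inv inv_mult_group inv_solve_left m_closed r_inv r_one m_assoc)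
    then show "?u (x, z) * e (inv z \<otimes> y) = (if z = y \<otimes> inv g then ?u (x, z) else 0)"
      by (simp add: e_def)
  qed
  moreover have "\<dots> = ?u (x, y \<otimes> inv g)" using fin y g by simp
  ultimately show ?thesis using 1 2 by simp
qed

lemma nf_decomp:
  assumes nf: "nf_coproduct G (\<Delta> :: ('a \<Rightarrow> 'k::field) \<Rightarrow> _)"
  shows "\<Delta> = (\<Sum>c\<in>carrier G. (\<lambda>f p. \<Delta> (grp_unit G) (\<one>, c) * D c f p))"
proof (rule ext, rule ext)
  fix f :: "'a \<Rightarrow> 'k" and p :: "'a \<times> 'a"
  let ?u = "\<Delta> (grp_unit G)"
  have rhs: "(\<Sum>c\<in>carrier G. (\<lambda>f p. ?u (\<one>, c) * D c f p)) f p = (\<Sum>c\<in>carrier G. ?u (\<one>, c) * D c f p)"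
    by (simp add: sum_fun_apply)
  show "\<Delta> f p = (\<Sum>c\<in>carrier G. (\<lambda>f p. ?u (\<one>, c) * D c f p)) f p"
  proof (cases "f \<in> grp_alg G")
    case False
    then show ?thesis using nf rhs by (simp add: nf_coproduct_def D_def)
  next
    case f: True
    obtain x y where p: "p = (x, y)" by (cases p)
    show ?thesis
    proof (cases "x \<in> carrier G \<and> y \<in> carrier G")
      case False
      have "\<Delta> f \<in> grp_alg (G \<times>\<times> G)" using nf f by (simp add: nf_coproduct_def)
      then show ?thesis using False rhs f p by (auto simp: grp_alg_def D_def)
    next
      case True
      then have x: "x \<in> carrier G" and y: "y \<in> carrier G" by auto
      have "\<Delta> f = \<Delta> (grp_conv G f (grp_unit G))" by (simp add: conv_unit_r[OF f])
      also have "\<dots> = grp_conv (G \<times>\<times> G) (tens f (grp_unit G)) ?u"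
        using nf f unit_in unfolding nf_coproduct_def by blast
      finally have "\<Delta> f (x, y) = (\<Sum>z\<in>carrier G. f z * ?u (inv z \<otimes> x, y))"
        using x y by (simp add: L1)
      also have "\<dots> = (\<Sum>z\<in>carrier G. f z * ?u (\<one>, y \<otimes> (inv z \<otimes> x)))"
      proof (rule sum.cong[OF refl])
        fix z assume z: "z \<in> carrier G"
        have "?u (inv (inv (inv z \<otimes> x)) \<otimes> \<one>, y) = ?u (\<one>, y \<otimes> inv (inv (inv z \<otimes> x)))"
          using nf_invariance[OF nf, of "inv (inv z \<otimes> x)" "\<one>" y] z x y by simp
        then show "f z * ?u (inv z \<otimes> x, y) = f z * ?u (\<one>, y \<otimes> (inv z \<otimes> x))"
          using z x y by simp
      qed
      also have "\<dots> = (\<Sum>c\<in>carrier G. ?u (\<one>, c) * f (x \<otimes> inv c \<otimes> y))"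
        by (rule sum.reindex_bij_witness[where i="\<lambda>c. x \<otimes> inv c \<otimes> y" and j="\<lambda>z. y \<otimes> (inv z \<otimes> x)"])
          (use x y in \<open>auto simp: m_assoc inv_mult_group\<close>)
      also have "\<dots> = (\<Sum>c\<in>carrier G. ?u (\<one>, c) * D c f (x, y))"
        using f x y by (simp add: D_app)
      finally show ?thesis using rhs p by simp
    qed
  qed
qed


lemma D_indep: "V.independent ((D :: 'a \<Rightarrow> ('a \<Rightarrow> 'k::field) \<Rightarrow> _) ` carrier G)"
  apply (rule V.independent_if_scalars_zero)
   apply (rule finite_imageI[OF fin])
  subgoal for u v
  proof -
    assume sum0: "(\<Sum>x\<in>(D :: 'a \<Rightarrow> ('a \<Rightarrow> 'k::field) \<Rightarrow> _) ` carrier G. (\<lambda>fa p. u x * x fa p)) = 0"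
      and v: "v \<in> (D :: 'a \<Rightarrow> ('a \<Rightarrow> 'k::field) \<Rightarrow> _) ` carrier G"
    obtain c0 where c0: "c0 \<in> carrier G" and vc: "v = D c0" using v by blast
    have "(0 :: ('a \<Rightarrow> 'k) \<Rightarrow> ('a \<times> 'a \<Rightarrow> 'k)) = (\<Sum>c\<in>carrier G. (\<lambda>fa p. u (D c) * D c fa p))"
      using sum0 sum.reindex[OF D_inj, of "\<lambda>x. (\<lambda>fa p. u x * x fa p)"] by (simp add: o_def)
    then have "0 = (\<Sum>c\<in>carrier G. (\<lambda>fa p. u (D c) * D c fa p)) (grp_unit G) (\<one>, c0)"
      by (metis zero_fun_def)
    also have "\<dots> = (\<Sum>c\<in>carrier G. u (D c) * D c (grp_unit G) (\<one>, c0))"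
      by (simp only: sum_fun_apply)
    also have "\<dots> = (\<Sum>c\<in>carrier G. if c = c0 then u (D c) else 0)"
      by (rule sum.cong[OF refl]) (simp add: D_unit c0)
    also have "\<dots> = u v" using fin c0 vc by simp
    finally show "u v = 0" by simp
  qed
  done

lemma frobdim_card: "frobdim TYPE('k::field) G = card (carrier G)"
proof -
  have "V.dim (frob_space TYPE('k) G) = card (carrier G)"
  proof (rule V.dim_unique[where B="(D :: 'a \<Rightarrow> ('a \<Rightarrow> 'k) \<Rightarrow> _) ` carrier G"])
    show "(D :: 'a \<Rightarrow> ('a \<Rightarrow> 'k) \<Rightarrow> _) ` carrier G \<subseteq> frob_space TYPE('k) G"
      using D_nf unfolding frob_space_def by blast
    show "frob_space TYPE('k) G \<subseteq> V.span ((D :: 'a \<Rightarrow> ('a \<Rightarrow> 'k) \<Rightarrow> _) ` carrier G)"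
    proof
      fix \<Delta> :: "('a \<Rightarrow> 'k) \<Rightarrow> ('a \<times> 'a \<Rightarrow> 'k)" assume "\<Delta> \<in> frob_space TYPE('k) G"
      then have nf: "nf_coproduct G \<Delta>" unfolding frob_space_def by blast
      have mem: "(\<Sum>c\<in>carrier G. (\<lambda>f p. \<Delta> (grp_unit G) (\<one>, c) * D c f p)) \<in> V.span ((D :: 'a \<Rightarrow> ('a \<Rightarrow> 'k) \<Rightarrow> _) ` carrier G)"
        apply (rule V.span_sum)
        apply (rule V.span_scale)
        apply (rule V.span_base)
        apply (erule imageI)
        done
      show "\<Delta> \<in> V.span ((D :: 'a \<Rightarrow> ('a \<Rightarrow> 'k) \<Rightarrow> _) ` carrier G)"
        by (subst nf_decomp[OF nf]) (rule mem)
    qed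
    show "V.independent ((D :: 'a \<Rightarrow> ('a \<Rightarrow> 'k) \<Rightarrow> _) ` carrier G)" by (rule D_indep)
    show "card ((D :: 'a \<Rightarrow> ('a \<Rightarrow> 'k) \<Rightarrow> _) ` carrier G) = card (carrier G)"
      by (rule card_image[OF D_inj])
  qed
  then show ?thesis unfolding frobdim_def .
qed

end

theorem corollary11:
  fixes G :: "'a monoid" and Gs :: "nat \<Rightarrow> 'b monoid" and p :: nat
  assumes "comm_group G" and "finite (carrier G)"
    and "\<And>i. i < p \<Longrightarrow> group (Gs i) \<and> cyclic_group (Gs i) \<and> finite (carrier (Gs i))"
    and "G \<cong> product_group {..<p} Gs"
  shows "frobdim TYPE('k::field) G = (\<Prod>i<p. card (carrier (Gs i)))"
proof -
  interpret fgrp G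
    using assms(1,2) by (simp add: fgrp_def fgrp_axioms_def comm_group.axioms(2))
  have "frobdim TYPE('k::field) G = card (carrier G)" by (rule frobdim_card)
  also have "\<dots> = card (carrier (product_group {..<p} Gs))" by (rule iso_same_card[OF assms(4)])
  also have "\<dots> = (\<Prod>i<p. card (carrier (Gs i)))" by (simp add: card_PiE)
  finally show ?thesis .
qed

end
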